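(* Let $b\in L^m_{\mathrm{loc}}(\mathbb{R}^n)$, let $\mathcal{S}$ be a sparse family, $m$ a positive integer, $h\in\{0,\dots,m\}$, and $A$ a Young function. Then for every $x$, $$\mathcal{A}_{A,\mathcal{S}}^{m-h}(b,f)(x)\leq \sum_{Q\in \mathcal{S}} |b(x)-b_Q|^m \|f\|_{A,Q}\, \chi_Q(x) + \sum_{Q\in \mathcal{S}} \big\|f|b-b_Q|^m\big\|_{A,Q}\, \chi_Q(x),$$ where $\mathcal{A}_{A,\mathcal{S}}^{m-h}(b,f)(x)=\sum_{Q\in\mathcal{S}}|b(x)-b_Q|^{m-h}\,\big\|f|b-b_Q|^h\big\|_{A,Q}\chi_Q(x)$.
   Context: In $\mathbb{R}^n$; $b_Q=\frac1{|Q|}\int_Qb$; for a Young function $A$, $\|g\|_{A,Q}=\inf\{\lambda>0:\frac1{|Q|}\int_QA(|g|/\lambda)\le1\}$. A sparse family: cubes $Q$ with pairwise disjoint $E_Q\subset Q$, $|E_Q|\ge\eta|Q|$. *)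

theory Defs
  imports "HOL-Analysis.Analysis"
begin

definition is_cube :: "(real^'n) set \<Rightarrow> bool" where
  "is_cube Q \<longleftrightarrow> (\<exists>a r. r > 0 \<and> Q = {x. \<forall>i. a$i \<le> x$i \<and> x$i < a$i + r})"

definition avg :: "(real^'n \<Rightarrow> real) \<Rightarrow> (real^'n) set \<Rightarrow> real" where
  "avg b Q = (\<integral>x\<in>Q. b x \<partial>lebesgue) / measure lebesgue Q"

definition young_function :: "(real \<Rightarrow> real) \<Rightarrow> bool" where
  "young_function A \<longleftrightarrow> continuous_on {0..} A \<and> convex_on {0..} A \<and> mono_on {0..} A
     \<and> A 0 = 0 \<and> filterlim A at_top at_top"

text \<open>Luxemburg-type local norm ||g||_{A,Q}, valued in [0,\<infinity>] (Inf {} = \<infinity>).\<close>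
definition lux_norm :: "(real \<Rightarrow> real) \<Rightarrow> (real^'n \<Rightarrow> real) \<Rightarrow> (real^'n) set \<Rightarrow> ennreal" where
  "lux_norm A g Q = Inf {ennreal l | l. l > 0 \<and>
      ennreal (1 / measure lebesgue Q) * (\<integral>\<^sup>+x\<in>Q. ennreal (A (\<bar>g x\<bar> / l)) \<partial>lebesgue) \<le> 1}"

definition sparse_family :: "real \<Rightarrow> (real^'n) set set \<Rightarrow> bool" where
  "sparse_family \<eta> S \<longleftrightarrow> 0 < \<eta> \<and> \<eta> < 1 \<and> (\<forall>Q\<in>S. is_cube Q) \<and>
     (\<exists>E. (\<forall>Q\<in>S. E Q \<in> sets lebesgue \<and> E Q \<subseteq> Q \<and> \<eta> * measure lebesgue Q \<le> measure lebesgue (E Q)) \<and>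
          (\<forall>Q\<in>S. \<forall>Q'\<in>S. Q \<noteq> Q' \<longrightarrow> E Q \<inter> E Q' = {}))"

definition Lloc :: "nat \<Rightarrow> (real^'n \<Rightarrow> real) \<Rightarrow> bool" where
  "Lloc m b \<longleftrightarrow> b \<in> borel_measurable lebesgue \<and>
     (\<forall>K. compact K \<longrightarrow> set_integrable lebesgue K (\<lambda>x. \<bar>b x\<bar> ^ m))"

text \<open>Sparse operator A^{k}_{A,S}(b,f)(x) with k = m-h; sum over S as a
  nonnegative (possibly infinite) sum.\<close>
definition sparse_op :: "(real \<Rightarrow> real) \<Rightarrow> (real^'n) set set \<Rightarrow> nat \<Rightarrow> nat \<Rightarrow>
    (real^'n \<Rightarrow> real) \<Rightarrow> (real^'n \<Rightarrow> real) \<Rightarrow> real^'n \<Rightarrow> ennreal" where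
  "sparse_op A S m h b f x = (\<integral>\<^sup>+Q. ennreal (\<bar>b x - avg b Q\<bar> ^ (m - h))
      * lux_norm A (\<lambda>y. f y * \<bar>b y - avg b Q\<bar> ^ h) Q * indicator Q x \<partial>count_space S)"

end

theory Submission
  imports Defs
begin

lemma Inf_add_ennreal:
  fixes S :: "ennreal set"
  assumes "S \<noteq> {}"
  shows "Inf S + c = Inf ((\<lambda>x. x + c) ` S)"
  using continuous_at_Inf_mono[of "\<lambda>x. x + c" S]
  using continuous_add[of "at_right (Inf S)", of "\<lambda>x. x" "\<lambda>x. c"] assms
  by (auto simp: mono_def)

lemma Inf_sum_ge:
  fixes S T :: "ennreal set" and X :: ennreal
  assumes "\<And>a b. a \<in> S \<Longrightarrow> b \<in> T \<Longrightarrow> X \<le> a + b"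
  shows "X \<le> Inf S + Inf T"
proof (cases "S = {} \<or> T = {}")
  case True then show ?thesis by auto
next
  case False
  have "X \<le> Inf S + b" if "b \<in> T" for b
  proof -
    have "X \<le> Inf ((\<lambda>x. x + b) ` S)" by (auto intro!: Inf_greatest assms that)
    then show ?thesis using Inf_add_ennreal[of S b] False by simp
  qed
  then have "X \<le> Inf ((\<lambda>b. Inf S + b) ` T)" by (auto intro!: Inf_greatest)
  also have "\<dots> = Inf S + Inf T"
    using Inf_add_ennreal[of T "Inf S"] False by (simp add: add.commute)
  finally show ?thesis .
qed

lemma cube_sets:
  assumes "is_cube (Q::(real^'n) set)" shows "Q \<in> sets lebesgue"
proof -
  obtain a r where Q: "Q = {x. \<forall>i. a$i \<le> x$i \<and> x$i < a$i + r}" using assms unfolding is_cube_def by auto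
  have "Q \<in> sets borel" unfolding Q by measurable
  then show ?thesis by simp
qed

lemma young_nonneg: "young_function A \<Longrightarrow> 0 \<le> s \<Longrightarrow> 0 \<le> A s"
  unfolding young_function_def by (metis atLeast_iff mono_onD order_refl)

lemma young_mono: "young_function A \<Longrightarrow> 0 \<le> s \<Longrightarrow> s \<le> t \<Longrightarrow> A s \<le> A t"
  unfolding young_function_def by (meson atLeast_iff mono_onD order_trans)

lemma young_scale: assumes "young_function A" "0 \<le> u" "0 \<le> t" "t \<le> 1"
  shows "A (t * u) \<le> t * A u"
proof -
  have c: "convex_on {0..} A" and z: "A 0 = 0" using assms(1) unfolding young_function_def by auto
  have "A ((1 - t) * 0 + t * u) \<le> (1 - t) * A 0 + t * A u"
    using convex_onD[OF c, of t 0 u] assms by auto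
  then show ?thesis using z by simp
qed

lemma young_meas:
  assumes "young_function A" "g \<in> borel_measurable lebesgue" "l > 0"
  shows "(\<lambda>y. ennreal (A (\<bar>g y\<bar> / l))) \<in> borel_measurable lebesgue"
proof -
  have c: "continuous_on {0..} A" using assms(1) unfolding young_function_def by auto
  have "continuous_on UNIV (\<lambda>s. A (max 0 s))"
    by (rule continuous_on_compose2[OF c]) (auto intro!: continuous_intros)
  then have "(\<lambda>y. A (max 0 (\<bar>g y\<bar> / l))) \<in> borel_measurable lebesgue"
    by (rule borel_measurable_continuous_on) (use assms in measurable)
  moreover have "max 0 (\<bar>g y\<bar> / l) = \<bar>g y\<bar> / l" for y using assms(3) by simp
  ultimately show ?thesis by simp
qed

lemma scale_le:
  assumes "c > 0"
  shows "ennreal c * lux_norm A g Q \<le> lux_norm A (\<lambda>y. c * g y) Q"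
  unfolding lux_norm_def
proof (rule Inf_greatest, clarify)
  fix l :: real
  assume l: "l > 0" and C: "ennreal (1 / measure lebesgue Q) *
      (\<integral>\<^sup>+x\<in>Q. ennreal (A (\<bar>c * g x\<bar> / l)) \<partial>lebesgue) \<le> 1"
  have eq: "\<bar>c * g x\<bar> / l = \<bar>g x\<bar> / (l / c)" for x using assms by (simp add: abs_mult)
  have "Inf {ennreal l | l. l > 0 \<and>
      ennreal (1 / measure lebesgue Q) * (\<integral>\<^sup>+x\<in>Q. ennreal (A (\<bar>g x\<bar> / l)) \<partial>lebesgue) \<le> 1}
      \<le> ennreal (l / c)"
    by (rule Inf_lower) (use C l assms eq in auto)
  then have "ennreal c * Inf {ennreal l | l. l > 0 \<and>
      ennreal (1 / measure lebesgue Q) * (\<integral>\<^sup>+x\<in>Q. ennreal (A (\<bar>g x\<bar> / l)) \<partial>lebesgue) \<le> 1}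
      \<le> ennreal c * ennreal (l / c)" by (rule mult_left_mono) simp
  also have "\<dots> = ennreal l" by (subst ennreal_mult[symmetric]) (use assms l in auto)
  finally show "ennreal c * Inf {ennreal l | l. l > 0 \<and>
      ennreal (1 / measure lebesgue Q) * (\<integral>\<^sup>+x\<in>Q. ennreal (A (\<bar>g x\<bar> / l)) \<partial>lebesgue) \<le> 1}
      \<le> ennreal l" .
qed

lemma scale_ge:
  assumes "c > 0"
  shows "lux_norm A (\<lambda>y. c * g y) Q \<le> ennreal c * lux_norm A g Q"
proof -
  have "ennreal (1/c) * lux_norm A (\<lambda>y. c * g y) Q \<le> lux_norm A (\<lambda>y. (1/c) * (c * g y)) Q"
    by (rule scale_le) (use assms in simp)
  also have "(\<lambda>y. (1/c) * (c * g y)) = g" using assms by auto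
  finally have "ennreal c * (ennreal (1/c) * lux_norm A (\<lambda>y. c * g y) Q) \<le> ennreal c * lux_norm A g Q"
    by (rule mult_left_mono) simp
  moreover have "ennreal c * ennreal (1/c) = 1" by (subst ennreal_mult[symmetric]) (use assms in auto)
  ultimately show ?thesis by (simp add: mult.assoc[symmetric])
qed

definition luxC :: "(real \<Rightarrow> real) \<Rightarrow> (real^'n \<Rightarrow> real) \<Rightarrow> (real^'n) set \<Rightarrow> real \<Rightarrow> bool" where
  "luxC A g Q l \<longleftrightarrow> ennreal (1 / measure lebesgue Q) * (\<integral>\<^sup>+x\<in>Q. ennreal (A (\<bar>g x\<bar> / l)) \<partial>lebesgue) \<le> 1"

lemma lux_alt: "lux_norm A g Q = Inf {ennreal l | l. l > 0 \<and> luxC A g Q l}"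
  unfolding lux_norm_def luxC_def ..

lemma luxC_tri:
  assumes Y: "young_function A" and m1: "g1 \<in> borel_measurable lebesgue"
    and m2: "g2 \<in> borel_measurable lebesgue" and Qs: "Q \<in> sets lebesgue"
    and pw: "\<And>y. \<bar>g y\<bar> \<le> max \<bar>g1 y\<bar> \<bar>g2 y\<bar>"
    and l1: "l1 > 0" and l2: "l2 > 0" and C1: "luxC A g1 Q l1" and C2: "luxC A g2 Q l2"
  shows "luxC A g Q (l1 + l2)"
proof -
  define L where "L = l1 + l2"
  define t1 where "t1 = l1 / L"
  define t2 where "t2 = l2 / L"
  have L: "L > 0" using l1 l2 by (simp add: L_def)
  have t1: "0 \<le> t1" "t1 \<le> 1" and t2: "0 \<le> t2" "t2 \<le> 1" and t12: "t1 + t2 = 1"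
    using l1 l2 L unfolding t1_def t2_def by (auto simp: L_def divide_simps add_divide_distrib[symmetric])
  have e1: "\<bar>u\<bar> / L = t1 * (\<bar>u\<bar> / l1)" for u using l1 L by (simp add: t1_def)
  have e2: "\<bar>u\<bar> / L = t2 * (\<bar>u\<bar> / l2)" for u using l2 L by (simp add: t2_def)
  have pt: "A (\<bar>g y\<bar> / L) \<le> t1 * A (\<bar>g1 y\<bar> / l1) + t2 * A (\<bar>g2 y\<bar> / l2)" for y
  proof (cases "\<bar>g1 y\<bar> \<ge> \<bar>g2 y\<bar>")
    case True
    then have "A (\<bar>g y\<bar> / L) \<le> A (\<bar>g1 y\<bar> / L)"
      using pw[of y] L by (intro young_mono[OF Y]) (auto simp: divide_right_mono)
    also have "\<dots> \<le> t1 * A (\<bar>g1 y\<bar> / l1)" unfolding e1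
      using t1 l1 by (intro young_scale[OF Y]) auto
    also have "\<dots> \<le> t1 * A (\<bar>g1 y\<bar> / l1) + t2 * A (\<bar>g2 y\<bar> / l2)"
      using t2 young_nonneg[OF Y, of "\<bar>g2 y\<bar> / l2"] l2 by simp
    finally show ?thesis .
  next
    case False
    then have "A (\<bar>g y\<bar> / L) \<le> A (\<bar>g2 y\<bar> / L)"
      using pw[of y] L by (intro young_mono[OF Y]) (auto simp: divide_right_mono)
    also have "\<dots> \<le> t2 * A (\<bar>g2 y\<bar> / l2)" unfolding e2
      using t2 l2 by (intro young_scale[OF Y]) auto
    also have "\<dots> \<le> t1 * A (\<bar>g1 y\<bar> / l1) + t2 * A (\<bar>g2 y\<bar> / l2)"
      using t1 young_nonneg[OF Y, of "\<bar>g1 y\<bar> / l1"] l1 by simp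
    finally show ?thesis .
  qed
  have ept: "ennreal (A (\<bar>g y\<bar> / L)) \<le> ennreal t1 * ennreal (A (\<bar>g1 y\<bar> / l1)) + ennreal t2 * ennreal (A (\<bar>g2 y\<bar> / l2))" for y
  proof -
    have n1: "0 \<le> A (\<bar>g1 y\<bar> / l1)" using young_nonneg[OF Y] l1 by simp
    have n2: "0 \<le> A (\<bar>g2 y\<bar> / l2)" using young_nonneg[OF Y] l2 by simp
    have "ennreal (A (\<bar>g y\<bar> / L)) \<le> ennreal (t1 * A (\<bar>g1 y\<bar> / l1) + t2 * A (\<bar>g2 y\<bar> / l2))"
      using pt[of y] by (rule ennreal_leI)
    also have "\<dots> = ennreal t1 * ennreal (A (\<bar>g1 y\<bar> / l1)) + ennreal t2 * ennreal (A (\<bar>g2 y\<bar> / l2))"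
      using n1 n2 t1 t2 by (simp add: ennreal_plus ennreal_mult)
    finally show ?thesis .
  qed
  define c where "c = ennreal (1 / measure lebesgue Q)"
  define I1 where "I1 = (\<integral>\<^sup>+x\<in>Q. ennreal (A (\<bar>g1 x\<bar> / l1)) \<partial>lebesgue)"
  define I2 where "I2 = (\<integral>\<^sup>+x\<in>Q. ennreal (A (\<bar>g2 x\<bar> / l2)) \<partial>lebesgue)"
  have M1: "(\<lambda>x. ennreal (A (\<bar>g1 x\<bar> / l1)) * indicator Q x) \<in> borel_measurable lebesgue"
    using young_meas[OF Y m1 l1] Qs by measurable
  have M2: "(\<lambda>x. ennreal (A (\<bar>g2 x\<bar> / l2)) * indicator Q x) \<in> borel_measurable lebesgue"
    using young_meas[OF Y m2 l2] Qs by measurable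
  have "(\<integral>\<^sup>+x\<in>Q. ennreal (A (\<bar>g x\<bar> / L)) \<partial>lebesgue) \<le>
      (\<integral>\<^sup>+x. ennreal t1 * (ennreal (A (\<bar>g1 x\<bar> / l1)) * indicator Q x)
          + ennreal t2 * (ennreal (A (\<bar>g2 x\<bar> / l2)) * indicator Q x) \<partial>lebesgue)"
    by (intro nn_integral_mono) (auto simp: ept indicator_def)
  also have "\<dots> = ennreal t1 * I1 + ennreal t2 * I2"
    unfolding I1_def I2_def using M1 M2
    by (subst nn_integral_add) (auto simp: nn_integral_cmult)
  finally have "c * (\<integral>\<^sup>+x\<in>Q. ennreal (A (\<bar>g x\<bar> / L)) \<partial>lebesgue) \<le> c * (ennreal t1 * I1 + ennreal t2 * I2)"
    by (rule mult_left_mono) simp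
  also have "\<dots> = ennreal t1 * (c * I1) + ennreal t2 * (c * I2)" by (simp add: algebra_simps)
  also have "\<dots> \<le> ennreal t1 * 1 + ennreal t2 * 1"
    using C1 C2 unfolding luxC_def c_def I1_def I2_def
    by (intro add_mono mult_left_mono) auto
  also have "\<dots> = 1" using t1 t2 t12 by (simp add: ennreal_plus[symmetric])
  finally show ?thesis unfolding luxC_def c_def L_def .
qed

lemma lux_tri:
  assumes Y: "young_function A" and m1: "g1 \<in> borel_measurable lebesgue"
    and m2: "g2 \<in> borel_measurable lebesgue" and Qs: "Q \<in> sets lebesgue"
    and pw: "\<And>y. \<bar>g y\<bar> \<le> max \<bar>g1 y\<bar> \<bar>g2 y\<bar>"
  shows "lux_norm A g Q \<le> lux_norm A g1 Q + lux_norm A g2 Q"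
  unfolding lux_alt
proof (rule Inf_sum_ge)
  fix a b assume "a \<in> {ennreal l | l. l > 0 \<and> luxC A g1 Q l}" "b \<in> {ennreal l | l. l > 0 \<and> luxC A g2 Q l}"
  then obtain l1 l2 where a: "a = ennreal l1" "l1 > 0" "luxC A g1 Q l1" and b: "b = ennreal l2" "l2 > 0" "luxC A g2 Q l2"
    by auto
  have "luxC A g Q (l1 + l2)" using luxC_tri[OF assms a(2) b(2) a(3) b(3)] .
  then have "Inf {ennreal l | l. l > 0 \<and> luxC A g Q l} \<le> ennreal (l1 + l2)"
    using a b by (intro Inf_lower) (auto intro!: exI[of _ "l1 + l2"])
  then show "Inf {ennreal l | l. l > 0 \<and> luxC A g Q l} \<le> a + b"
    using a b by (simp add: ennreal_plus)
qed

lemma perQ: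
  assumes Y: "young_function A" and bm: "b \<in> borel_measurable lebesgue"
    and fm: "f \<in> borel_measurable lebesgue" and Qs: "Q \<in> sets lebesgue"
    and m: "m \<ge> 1" and h: "h \<le> m"
  shows "ennreal (\<bar>b x - c\<bar> ^ (m - h)) * lux_norm A (\<lambda>y. f y * \<bar>b y - c\<bar> ^ h) Q
     \<le> ennreal (\<bar>b x - c\<bar> ^ m) * lux_norm A f Q + lux_norm A (\<lambda>y. f y * \<bar>b y - c\<bar> ^ m) Q"
proof (cases "\<bar>b x - c\<bar> = 0")
  case True
  show ?thesis
  proof (cases "h = m")
    case True
    with \<open>\<bar>b x - c\<bar> = 0\<close> m show ?thesis by simp
  next
    case False
    with \<open>\<bar>b x - c\<bar> = 0\<close> h have "m - h \<noteq> 0" by simp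
    then have "\<bar>b x - c\<bar> ^ (m - h) = 0" using \<open>\<bar>b x - c\<bar> = 0\<close> by simp
    then show ?thesis unfolding \<open>\<bar>b x - c\<bar> ^ (m - h) = 0\<close> by simp
  qed
next
  case False
  define t where "t = \<bar>b x - c\<bar>"
  have t: "t > 0" using False by (simp add: t_def)
  have "ennreal (t ^ (m - h)) * lux_norm A (\<lambda>y. f y * \<bar>b y - c\<bar> ^ h) Q
      \<le> lux_norm A (\<lambda>y. t ^ (m - h) * (f y * \<bar>b y - c\<bar> ^ h)) Q"
    by (rule scale_le) (use t in simp)
  also have "\<dots> \<le> lux_norm A (\<lambda>y. t ^ m * f y) Q + lux_norm A (\<lambda>y. f y * \<bar>b y - c\<bar> ^ m) Q"
  proof (rule lux_tri[OF Y _ _ Qs])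
    show "(\<lambda>y. t ^ m * f y) \<in> borel_measurable lebesgue" using fm by measurable
    show "(\<lambda>y. f y * \<bar>b y - c\<bar> ^ m) \<in> borel_measurable lebesgue" using fm bm by measurable
    fix y
    define w where "w = \<bar>b y - c\<bar>"
    have w: "w \<ge> 0" by (simp add: w_def)
    have "t ^ (m - h) * w ^ h \<le> max (t ^ m) (w ^ m)"
    proof (cases "w \<le> t")
      case True
      then have "t ^ (m - h) * w ^ h \<le> t ^ (m - h) * t ^ h"
        using w t by (intro mult_left_mono power_mono) auto
      also have "\<dots> = t ^ m" using h by (simp add: power_add[symmetric])
      finally show ?thesis by simp
    next
      case False
      then have "t ^ (m - h) * w ^ h \<le> w ^ (m - h) * w ^ h"
        using w t by (intro mult_right_mono power_mono) auto
      also have "\<dots> = w ^ m" using h by (simp add: power_add[symmetric])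
      finally show ?thesis by simp
    qed
    then have "\<bar>f y\<bar> * (t ^ (m - h) * w ^ h) \<le> \<bar>f y\<bar> * max (t ^ m) (w ^ m)"
      by (rule mult_left_mono) simp
    then show "\<bar>t ^ (m - h) * (f y * \<bar>b y - c\<bar> ^ h)\<bar> \<le> max \<bar>t ^ m * f y\<bar> \<bar>f y * \<bar>b y - c\<bar> ^ m\<bar>"
      using t w unfolding w_def[symmetric]
      by (auto simp: abs_mult max_mult_distrib_left mult_ac split: if_splits)
  qed
  also have "\<dots> \<le> ennreal (t ^ m) * lux_norm A f Q + lux_norm A (\<lambda>y. f y * \<bar>b y - c\<bar> ^ m) Q"
    by (intro add_right_mono scale_ge) (use t in simp)
  finally show ?thesis unfolding t_def .
qed

theorem lemma3p8:
  fixes b f :: "real^'n \<Rightarrow> real" and S :: "(real^'n) set set" and A :: "real \<Rightarrow> real"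
    and m h :: nat and \<eta> :: real
  assumes "Lloc m b" and "f \<in> borel_measurable lebesgue"
    and "sparse_family \<eta> S" and "m \<ge> 1" and "h \<le> m" and "young_function A"
  shows "sparse_op A S m h b f x \<le>
      (\<integral>\<^sup>+Q. ennreal (\<bar>b x - avg b Q\<bar> ^ m) * lux_norm A f Q * indicator Q x \<partial>count_space S)
    + (\<integral>\<^sup>+Q. lux_norm A (\<lambda>y. f y * \<bar>b y - avg b Q\<bar> ^ m) Q * indicator Q x \<partial>count_space S)"
proof -
  have bm: "b \<in> borel_measurable lebesgue" using assms(1) unfolding Lloc_def by auto
  have cubes: "\<And>Q. Q \<in> S \<Longrightarrow> Q \<in> sets lebesgue"
    using assms(3) cube_sets unfolding sparse_family_def by blast
  have "sparse_op A S m h b f x \<le>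
      (\<integral>\<^sup>+Q. ennreal (\<bar>b x - avg b Q\<bar> ^ m) * lux_norm A f Q * indicator Q x
         + lux_norm A (\<lambda>y. f y * \<bar>b y - avg b Q\<bar> ^ m) Q * indicator Q x \<partial>count_space S)"
    unfolding sparse_op_def
  proof (rule nn_integral_mono)
    fix Q assume "Q \<in> space (count_space S)"
    then have Qs: "Q \<in> sets lebesgue" using cubes by simp
    show "ennreal (\<bar>b x - avg b Q\<bar> ^ (m - h)) * lux_norm A (\<lambda>y. f y * \<bar>b y - avg b Q\<bar> ^ h) Q * indicator Q x
      \<le> ennreal (\<bar>b x - avg b Q\<bar> ^ m) * lux_norm A f Q * indicator Q x
         + lux_norm A (\<lambda>y. f y * \<bar>b y - avg b Q\<bar> ^ m) Q * indicator Q x"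
      using perQ[OF assms(6) bm assms(2) Qs assms(4) assms(5), of x "avg b Q"]
      by (cases "x \<in> Q") auto
  qed
  also have "\<dots> = (\<integral>\<^sup>+Q. ennreal (\<bar>b x - avg b Q\<bar> ^ m) * lux_norm A f Q * indicator Q x \<partial>count_space S)
    + (\<integral>\<^sup>+Q. lux_norm A (\<lambda>y. f y * \<bar>b y - avg b Q\<bar> ^ m) Q * indicator Q x \<partial>count_space S)"
    by (rule nn_integral_add) auto
  finally show ?thesis .
qed

end
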